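(* Let $\mathcal{M}$ be a circular orientable embedding of a connected graph $X$ with $n$ vertices, $\ell$ edges and $s$ faces, and let $U$ be its vertex-face transition matrix. If either $X$ or its dual graph is regular, then \[\operatorname{tr}(U)=2\left(\frac{ns}{\ell}-(n+s-\ell)\right).\]
   Context: Setting. A circular embedding is a cellular embedding in which every face is bounded by a cycle. Arcs are ordered pairs $(u,v)$ with $\{u,v\}$ an edge, and $u$ is the tail. Vertex-face transition matrix. Fix a consistent orientation of the faces: for each edge shared by two faces, the two faces give it opposite directions. Then every arc lies in exactly one facial walk. Let $M$ be the arc-face incidence matrix and $N$ the arc-tail incidence matrix ($N_{(a,b),u}=1$ iff $a=u$). Let $\widehat M,\widehat N$ be these matrices with columns scaled to unit length. The vertex-face transition matrix is $U=(2\widehat M\widehat M^T-I)(2\widehat N\widehat N^T-I)$. The dual graph has the faces as vertices, with two faces adjacent for each edge they share. *)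

theory Defs
  imports Complex_Main "HOL-Combinatorics.Permutations"
begin

definition simple_graph :: "'v set \<Rightarrow> ('v \<Rightarrow> 'v \<Rightarrow> bool) \<Rightarrow> bool" where
  "simple_graph V E \<longleftrightarrow> finite V \<and>
     (\<forall>u v. E u v \<longrightarrow> u \<in> V \<and> v \<in> V \<and> E v u \<and> u \<noteq> v)"

definition connected_graph :: "'v set \<Rightarrow> ('v \<Rightarrow> 'v \<Rightarrow> bool) \<Rightarrow> bool" where
  "connected_graph V E \<longleftrightarrow> simple_graph V E \<and> V \<noteq> {} \<and>
     (\<forall>u\<in>V. \<forall>v\<in>V. E\<^sup>*\<^sup>* u v)"

text \<open>Arcs: ordered pairs (u,v) with {u,v} an edge; u = fst is the tail.\<close>
definition arcs :: "'v set \<Rightarrow> ('v \<Rightarrow> 'v \<Rightarrow> bool) \<Rightarrow> ('v \<times> 'v) set" where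
  "arcs V E = {(u, v). u \<in> V \<and> v \<in> V \<and> E u v}"

definition graph_edges :: "('v \<Rightarrow> 'v \<Rightarrow> bool) \<Rightarrow> 'v set set" where
  "graph_edges E = {{u, v} | u v. E u v}"

definition degree :: "('v \<Rightarrow> 'v \<Rightarrow> bool) \<Rightarrow> 'v \<Rightarrow> nat" where
  "degree E u = card {v. E u v}"

definition regular_graph :: "'v set \<Rightarrow> ('v \<Rightarrow> 'v \<Rightarrow> bool) \<Rightarrow> bool" where
  "regular_graph V E \<longleftrightarrow> (\<exists>k. \<forall>u\<in>V. degree E u = k)"

text \<open>An orientable cellular embedding of a connected graph is encoded (up to
  homeomorphism) by a rotation system: a permutation rho of the arcs that fixes
  tails and acts as a single cyclic permutation on the arcs leaving each vertex.\<close>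
definition rotation_system ::
  "'v set \<Rightarrow> ('v \<Rightarrow> 'v \<Rightarrow> bool) \<Rightarrow> ('v \<times> 'v \<Rightarrow> 'v \<times> 'v) \<Rightarrow> bool" where
  "rotation_system V E \<rho> \<longleftrightarrow> \<rho> permutes arcs V E \<and>
     (\<forall>a\<in>arcs V E. fst (\<rho> a) = fst a) \<and>
     (\<forall>a\<in>arcs V E. \<forall>b\<in>arcs V E. fst a = fst b \<longrightarrow> (\<exists>k. (\<rho> ^^ k) a = b))"

definition face_perm :: "('v \<times> 'v \<Rightarrow> 'v \<times> 'v) \<Rightarrow> 'v \<times> 'v \<Rightarrow> 'v \<times> 'v" where
  "face_perm \<rho> a = \<rho> (snd a, fst a)"

definition face_of :: "('v \<times> 'v \<Rightarrow> 'v \<times> 'v) \<Rightarrow> 'v \<times> 'v \<Rightarrow> ('v \<times> 'v) set" where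
  "face_of \<rho> a = {(face_perm \<rho> ^^ k) a | k. True}"

definition faces ::
  "'v set \<Rightarrow> ('v \<Rightarrow> 'v \<Rightarrow> bool) \<Rightarrow> ('v \<times> 'v \<Rightarrow> 'v \<times> 'v) \<Rightarrow> ('v \<times> 'v) set set" where
  "faces V E \<rho> = face_of \<rho> ` arcs V E"

text \<open>Circular: every facial walk is a cycle, i.e. it has length at least 3
  and visits pairwise distinct vertices (tails of its arcs are distinct).\<close>
definition circular ::
  "'v set \<Rightarrow> ('v \<Rightarrow> 'v \<Rightarrow> bool) \<Rightarrow> ('v \<times> 'v \<Rightarrow> 'v \<times> 'v) \<Rightarrow> bool" where
  "circular V E \<rho> \<longleftrightarrow> (\<forall>f\<in>faces V E \<rho>. card f \<ge> 3 \<and> inj_on fst f)"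

text \<open>Degree of a face in the dual (multi)graph: the number of edges on its
  boundary, counted with multiplicity, i.e. the number of arcs of its facial walk.\<close>
definition dual_degree :: "('v \<times> 'v) set \<Rightarrow> nat" where
  "dual_degree f = card f"

definition dual_regular ::
  "'v set \<Rightarrow> ('v \<Rightarrow> 'v \<Rightarrow> bool) \<Rightarrow> ('v \<times> 'v \<Rightarrow> 'v \<times> 'v) \<Rightarrow> bool" where
  "dual_regular V E \<rho> \<longleftrightarrow> (\<exists>k. \<forall>f\<in>faces V E \<rho>. dual_degree f = k)"

definition mmult :: "'k set \<Rightarrow> ('i \<Rightarrow> 'k \<Rightarrow> real) \<Rightarrow> ('k \<Rightarrow> 'j \<Rightarrow> real) \<Rightarrow> 'i \<Rightarrow> 'j \<Rightarrow> real" where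
  "mmult K X Y i j = (\<Sum>k\<in>K. X i k * Y k j)"

definition mtranspose :: "('i \<Rightarrow> 'j \<Rightarrow> real) \<Rightarrow> 'j \<Rightarrow> 'i \<Rightarrow> real" where
  "mtranspose X j i = X i j"

definition idm :: "'i \<Rightarrow> 'i \<Rightarrow> real" where
  "idm i j = (if i = j then 1 else 0)"

definition mtrace :: "'i set \<Rightarrow> ('i \<Rightarrow> 'i \<Rightarrow> real) \<Rightarrow> real" where
  "mtrace I X = (\<Sum>i\<in>I. X i i)"

definition col_normalize :: "'i set \<Rightarrow> ('i \<Rightarrow> 'j \<Rightarrow> real) \<Rightarrow> 'i \<Rightarrow> 'j \<Rightarrow> real" where
  "col_normalize R X i j = X i j / sqrt (\<Sum>r\<in>R. (X r j)\<^sup>2)"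

definition arc_face_inc :: "'v \<times> 'v \<Rightarrow> ('v \<times> 'v) set \<Rightarrow> real" where
  "arc_face_inc a f = (if a \<in> f then 1 else 0)"

definition arc_tail_inc :: "'v \<times> 'v \<Rightarrow> 'v \<Rightarrow> real" where
  "arc_tail_inc a u = (if fst a = u then 1 else 0)"

definition vf_transition ::
  "'v set \<Rightarrow> ('v \<Rightarrow> 'v \<Rightarrow> bool) \<Rightarrow> ('v \<times> 'v \<Rightarrow> 'v \<times> 'v) \<Rightarrow>
   'v \<times> 'v \<Rightarrow> 'v \<times> 'v \<Rightarrow> real" where
  "vf_transition V E \<rho> =
     (let A = arcs V E; F = faces V E \<rho>;
          Mh = col_normalize A arc_face_inc;
          Nh = col_normalize A arc_tail_inc
      in mmult A (\<lambda>a b. 2 * mmult F Mh (mtranspose Mh) a b - idm a b)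
                 (\<lambda>a b. 2 * mmult V Nh (mtranspose Nh) a b - idm a b))"

end

theory Submission
  imports Defs "HOL-Combinatorics.Cycles"
begin

locale rs =
  fixes V :: "'v set" and E :: "'v \<Rightarrow> 'v \<Rightarrow> bool" and \<rho> :: "'v \<times> 'v \<Rightarrow> 'v \<times> 'v"
  assumes sg: "simple_graph V E" and rot: "rotation_system V E \<rho>" and circ: "circular V E \<rho>"
begin

abbreviation "A \<equiv> arcs V E"
abbreviation "\<sigma> \<equiv> face_perm \<rho>"
abbreviation "fc \<equiv> face_of \<rho>"
abbreviation "F \<equiv> faces V E \<rho>"

lemma finV: "finite V" using sg by (simp add: simple_graph_def)

lemma finA: "finite A"
proof -
  have "A \<subseteq> V \<times> V" by (auto simp: arcs_def)
  then show ?thesis using finV by (meson finite_SigmaI finite_subset)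
qed

lemma rho_perm: "\<rho> permutes A" using rot by (simp add: rotation_system_def)

lemma sigma_in: "a \<in> A \<Longrightarrow> \<sigma> a \<in> A"
proof -
  assume "a \<in> A"
  then have "(snd a, fst a) \<in> A" using sg by (auto simp: arcs_def simple_graph_def)
  then show ?thesis using rho_perm by (simp add: face_perm_def permutes_in_image)
qed

lemma sigma_inj: "inj_on \<sigma> A"
proof (rule inj_onI)
  fix a b assume "a \<in> A" "b \<in> A" "\<sigma> a = \<sigma> b"
  then have "\<rho> (snd a, fst a) = \<rho> (snd b, fst b)" by (simp add: face_perm_def)
  then have "(snd a, fst a) = (snd b, fst b)" using rho_perm by (metis permutes_inj injD)
  then show "a = b" by (simp add: prod_eq_iff)
qed

definition "sr x = (if x \<in> A then \<sigma> x else x)"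

lemma sr_perm: "sr permutes A"
  apply (rule inj_imp_permutes)
  using sigma_inj finA sigma_in by (auto simp: inj_on_def sr_def)

lemma pow_in: "a \<in> A \<Longrightarrow> (\<sigma> ^^ k) a \<in> A \<and> (\<sigma> ^^ k) a = (sr ^^ k) a"
  by (induction k) (auto simp: sigma_in sr_def)

lemma nil: obtains N where "N > 0" "(sr ^^ N) = id"
  using permutation_is_nilpotent[of sr] sr_perm finA permutes_imp_permutation by metis

lemma fc_sub: "a \<in> A \<Longrightarrow> fc a \<subseteq> A" unfolding face_of_def using pow_in by blast

lemma fc_self: "a \<in> fc a"
  unfolding face_of_def by (auto intro!: exI[of _ 0])

lemma fc_trans: "b \<in> fc a \<Longrightarrow> fc b \<subseteq> fc a"
proof
  fix x assume "b \<in> fc a" "x \<in> fc b"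
  then obtain k m where "b = (\<sigma> ^^ k) a" "x = (\<sigma> ^^ m) b" by (auto simp: face_of_def)
  then have "x = (\<sigma> ^^ (m + k)) a" by (simp add: funpow_add)
  then show "x \<in> fc a" by (auto simp: face_of_def)
qed

lemma fc_back: assumes "a \<in> A" "b \<in> fc a" shows "a \<in> fc b"
proof -
  obtain k where k: "b = (\<sigma> ^^ k) a" using assms(2) by (auto simp: face_of_def)
  obtain N where N: "N > 0" "(sr ^^ N) = id" using nil by blast
  have le: "k \<le> N * k" using N(1) by simp
  have "(\<sigma> ^^ (N * k - k)) b = (\<sigma> ^^ (N * k - k + k)) a" by (simp add: k funpow_add)
  also have "\<dots> = (\<sigma> ^^ (N * k)) a" using le by simp
  also have "\<dots> = (sr ^^ (N * k)) a" using pow_in assms(1) by blast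
  also have "\<dots> = a" by (simp add: funpow_mult[symmetric] N(2))
  finally show ?thesis unfolding face_of_def by (auto intro!: exI[of _ "N * k - k"])
qed

lemma fc_eq: "a \<in> A \<Longrightarrow> b \<in> fc a \<Longrightarrow> fc b = fc a"
  using fc_trans fc_back by blast

lemma fc_iff: "a \<in> A \<Longrightarrow> x \<in> A \<Longrightarrow> (x \<in> fc a \<longleftrightarrow> fc x = fc a)"
  using fc_eq fc_self by metis

lemma F_elem: "f \<in> F \<Longrightarrow> \<exists>c\<in>A. f = fc c" by (auto simp: faces_def)

lemma fc_in_F: "a \<in> A \<Longrightarrow> fc a \<in> F" by (simp add: faces_def)

lemma fin_fc: "a \<in> A \<Longrightarrow> finite (fc a)" using fc_sub finA finite_subset by blast

lemma card_fc: "a \<in> A \<Longrightarrow> card (fc a) > 0"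
  using fin_fc fc_self card_gt_0_iff by blast

lemma same_face_tail: "a \<in> A \<Longrightarrow> b \<in> fc a \<Longrightarrow> fst b = fst a \<Longrightarrow> b = a"
  using circ fc_in_F fc_self unfolding circular_def inj_on_def by blast

definition "dd u = card {r\<in>A. fst r = u}"

lemma dd_pos: "a \<in> A \<Longrightarrow> dd (fst a) > 0"
proof -
  assume a: "a \<in> A"
  have "finite {r\<in>A. fst r = fst a}" using finA by simp
  moreover have "a \<in> {r\<in>A. fst r = fst a}" using a by simp
  ultimately show ?thesis unfolding dd_def by (subst card_gt_0_iff) blast
qed

lemma P_eq: assumes a: "a \<in> A"
  shows "mmult F (col_normalize A arc_face_inc) (mtranspose (col_normalize A arc_face_inc)) a b
      = (if b \<in> fc a then 1 / real (card (fc a)) else 0)"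
proof -
  have fin: "finite F" using finA by (simp add: faces_def)
  have cs: "(\<Sum>r\<in>A. (arc_face_inc r f)\<^sup>2) = real (card f)" if fF: "f \<in> F" for f
  proof -
    obtain c where c: "c \<in> A" "f = fc c" using F_elem fF by blast
    have sub: "f \<subseteq> A" using fc_sub c by simp
    have "(\<Sum>r\<in>A. (arc_face_inc r f)\<^sup>2) = (\<Sum>r\<in>A. if r \<in> f then 1 else 0)"
      by (rule sum.cong) (auto simp: arc_face_inc_def)
    also have "\<dots> = real (card (A \<inter> f))" using finA by (simp add: sum.If_cases)
    also have "A \<inter> f = f" using sub by blast
    finally show ?thesis .
  qed
  have "mmult F (col_normalize A arc_face_inc) (mtranspose (col_normalize A arc_face_inc)) a b
      = (\<Sum>f\<in>F. if f = fc a then (if b \<in> fc a then 1 / real (card (fc a)) else 0) else 0)"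
    unfolding mmult_def
  proof (rule sum.cong[OF refl])
    fix f assume f: "f \<in> F"
    obtain c where c: "c \<in> A" "f = fc c" using F_elem f by blast
    have cp: "card f > 0" using card_fc c by simp
    have iff: "(a \<in> f \<and> b \<in> f) \<longleftrightarrow> (f = fc a \<and> b \<in> fc a)"
      using c fc_eq fc_self a by metis
    have "col_normalize A arc_face_inc a f * mtranspose (col_normalize A arc_face_inc) f b
        = (if a \<in> f \<and> b \<in> f then 1 / real (card f) else 0)"
      unfolding col_normalize_def mtranspose_def cs[OF f] using cp by (simp add: arc_face_inc_def)
    then show "col_normalize A arc_face_inc a f * mtranspose (col_normalize A arc_face_inc) f b
        = (if f = fc a then (if b \<in> fc a then 1 / real (card (fc a)) else 0) else 0)"
      using iff by auto
  qed
  also have "\<dots> = (if b \<in> fc a then 1 / real (card (fc a)) else 0)"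
    using fin fc_in_F[OF a] by (simp add: sum.delta')
  finally show ?thesis .
qed

lemma Q_eq: assumes a: "a \<in> A"
  shows "mmult V (col_normalize A arc_tail_inc) (mtranspose (col_normalize A arc_tail_inc)) a b
      = (if fst b = fst a then 1 / real (dd (fst a)) else 0)"
proof -
  have cs: "(\<Sum>r\<in>A. (arc_tail_inc r u)\<^sup>2) = real (dd u)" for u
  proof -
    have "(\<Sum>r\<in>A. (arc_tail_inc r u)\<^sup>2) = (\<Sum>r\<in>A. if fst r = u then 1 else 0)"
      by (rule sum.cong) (auto simp: arc_tail_inc_def)
    also have "\<dots> = real (card (A \<inter> {r. fst r = u}))" using finA by (simp add: sum.If_cases)
    also have "A \<inter> {r. fst r = u} = {r\<in>A. fst r = u}" by blast
    finally show ?thesis by (simp add: dd_def)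
  qed
  have fa: "fst a \<in> V" using a by (auto simp: arcs_def)
  have "mmult V (col_normalize A arc_tail_inc) (mtranspose (col_normalize A arc_tail_inc)) a b
      = (\<Sum>u\<in>V. if u = fst a then (if fst b = fst a then 1 / real (dd (fst a)) else 0) else 0)"
    unfolding mmult_def
  proof (rule sum.cong[OF refl])
    fix u assume u: "u \<in> V"
    show "col_normalize A arc_tail_inc a u * mtranspose (col_normalize A arc_tail_inc) u b
        = (if u = fst a then (if fst b = fst a then 1 / real (dd (fst a)) else 0) else 0)"
      unfolding col_normalize_def mtranspose_def cs using dd_pos[OF a] by (auto simp: arc_tail_inc_def)
  qed
  also have "\<dots> = (if fst b = fst a then 1 / real (dd (fst a)) else 0)"
    using finV fa by (simp add: sum.delta')
  finally show ?thesis .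
qed

lemma U_diag: assumes a: "a \<in> A"
  shows "vf_transition V E \<rho> a a = (2 / real (card (fc a)) - 1) * (2 / real (dd (fst a)) - 1)"
proof -
  let ?P = "mmult F (col_normalize A arc_face_inc) (mtranspose (col_normalize A arc_face_inc))"
  let ?Q = "mmult V (col_normalize A arc_tail_inc) (mtranspose (col_normalize A arc_tail_inc))"
  let ?t = "\<lambda>b. (2 * ?P a b - idm a b) * (2 * ?Q b a - idm b a)"
  have "vf_transition V E \<rho> a a = (\<Sum>b\<in>A. ?t b)"
    by (simp add: vf_transition_def Let_def mmult_def)
  also have "\<dots> = (\<Sum>b\<in>A. if b = a then ?t a else 0)"
  proof (rule sum.cong[OF refl])
    fix b assume b: "b \<in> A"
    show "?t b = (if b = a then ?t a else 0)"
    proof (cases "b = a")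
      case False
      have "?P a b * ?Q b a = 0"
        using P_eq[OF a, of b] Q_eq[OF b, of a] same_face_tail[OF a, of b] False by auto
      then show ?thesis using False by (simp add: idm_def algebra_simps)
    qed simp
  qed
  also have "\<dots> = ?t a" using a finA by (simp add: sum.delta')
  also have "\<dots> = (2 / real (card (fc a)) - 1) * (2 / real (dd (fst a)) - 1)"
    using P_eq[OF a, of a] Q_eq[OF a, of a] fc_self by (simp add: idm_def)
  finally show ?thesis .
qed

lemma sum_faces: "(\<Sum>a\<in>A. g (fc a)) = (\<Sum>f\<in>F. real (card f) * g f)"
proof -
  have "(\<Sum>a\<in>A. g (fc a)) = (\<Sum>f\<in>fc ` A. \<Sum>x\<in>{x\<in>A. fc x = f}. g (fc x))"
    using finA by (rule sum.image_gen)
  also have "\<dots> = (\<Sum>f\<in>F. real (card f) * g f)"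
    unfolding faces_def
  proof (rule sum.cong[OF refl])
    fix f assume "f \<in> fc ` A"
    then obtain c where c: "c \<in> A" "f = fc c" by blast
    have "{x\<in>A. fc x = f} = f" using c fc_iff fc_sub by blast
    then show "(\<Sum>x\<in>{x\<in>A. fc x = f}. g (fc x)) = real (card f) * g f"
      by (smt (verit) mem_Collect_eq sum.cong sum_constant)
  qed
  finally show ?thesis .
qed

lemma sum_tails: "(\<Sum>a\<in>A. g (fst a)) = (\<Sum>u\<in>fst ` A. real (dd u) * g u)"
proof -
  have "(\<Sum>a\<in>A. g (fst a)) = (\<Sum>u\<in>fst ` A. \<Sum>x\<in>{x\<in>A. fst x = u}. g (fst x))"
    using finA by (rule sum.image_gen)
  also have "\<dots> = (\<Sum>u\<in>fst ` A. real (dd u) * g u)"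
    by (rule sum.cong[OF refl]) (simp add: dd_def)
  finally show ?thesis .
qed

lemma card_F_sum: "(\<Sum>a\<in>A. 1 / real (card (fc a))) = real (card F)"
proof -
  have "(\<Sum>a\<in>A. 1 / real (card (fc a))) = (\<Sum>f\<in>F. real (card f) * (1 / real (card f)))"
    by (rule sum_faces)
  also have "\<dots> = (\<Sum>f\<in>F. 1)"
    apply (rule sum.cong[OF refl])
    using F_elem card_fc by fastforce
  finally show ?thesis by simp
qed

lemma card_V_sum: "(\<Sum>a\<in>A. 1 / real (dd (fst a))) = real (card (fst ` A))"
proof -
  have "(\<Sum>a\<in>A. 1 / real (dd (fst a))) = (\<Sum>u\<in>fst ` A. real (dd u) * (1 / real (dd u)))"
    by (rule sum_tails)
  also have "\<dots> = (\<Sum>u\<in>fst ` A. 1)"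
    apply (rule sum.cong[OF refl])
    using dd_pos by fastforce
  finally show ?thesis by simp
qed

lemma card_A_edges: "card A = 2 * card (graph_edges E)"
proof -
  have ge: "graph_edges E = (\<lambda>a. {fst a, snd a}) ` A"
    using sg unfolding graph_edges_def arcs_def simple_graph_def by (auto simp: image_iff; blast)
  have "real (card A) = (\<Sum>a\<in>A. 1)" by simp
  also have "\<dots> = (\<Sum>e\<in>(\<lambda>a. {fst a, snd a}) ` A. \<Sum>x\<in>{x\<in>A. {fst x, snd x} = e}. 1)"
    using finA by (rule sum.image_gen)
  also have "\<dots> = (\<Sum>e\<in>(\<lambda>a. {fst a, snd a}) ` A. 2)"
  proof (rule sum.cong[OF refl])
    fix e assume "e \<in> (\<lambda>a. {fst a, snd a}) ` A"
    then obtain u v where uv: "(u, v) \<in> A" "e = {u, v}" by auto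
    have ne: "u \<noteq> v" and vu: "(v, u) \<in> A"
      using uv(1) sg by (auto simp: arcs_def simple_graph_def)
    have "{x\<in>A. {fst x, snd x} = e} = {(u, v), (v, u)}"
      using uv vu by (auto simp: doubleton_eq_iff)
    then show "(\<Sum>x\<in>{x\<in>A. {fst x, snd x} = e}. 1) = (2::real)" using ne by simp
  qed
  also have "\<dots> = 2 * real (card (graph_edges E))" using ge by simp
  finally show ?thesis by linarith
qed

lemma trace_eq: "mtrace A (vf_transition V E \<rho>)
   = 4 * (\<Sum>a\<in>A. 1 / real (card (fc a)) * (1 / real (dd (fst a))))
     - 2 * real (card F) - 2 * real (card (fst ` A)) + real (card A)"
proof -
  have "mtrace A (vf_transition V E \<rho>) = (\<Sum>a\<in>A. 4 * (1 / real (card (fc a)) * (1 / real (dd (fst a))))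
      - 2 * (1 / real (card (fc a))) - 2 * (1 / real (dd (fst a))) + 1)"
    unfolding mtrace_def
    by (rule sum.cong[OF refl]) (simp add: U_diag algebra_simps)
  also have "\<dots> = 4 * (\<Sum>a\<in>A. 1 / real (card (fc a)) * (1 / real (dd (fst a))))
      - 2 * (\<Sum>a\<in>A. 1 / real (card (fc a))) - 2 * (\<Sum>a\<in>A. 1 / real (dd (fst a))) + (\<Sum>a\<in>A. 1)"
    by (simp add: sum.distrib sum_subtractf sum_distrib_left)
  finally show ?thesis using card_F_sum card_V_sum by simp
qed

end

theorem lemma2p3:
  fixes V :: "'v set" and E :: "'v \<Rightarrow> 'v \<Rightarrow> bool" and \<rho> :: "'v \<times> 'v \<Rightarrow> 'v \<times> 'v"
  assumes "connected_graph V E"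
    and "arcs V E \<noteq> {}"
    and "rotation_system V E \<rho>"
    and "circular V E \<rho>"
    and "regular_graph V E \<or> dual_regular V E \<rho>"
  shows "mtrace (arcs V E) (vf_transition V E \<rho>) =
    2 * (real (card V) * real (card (faces V E \<rho>)) / real (card (graph_edges E))
         - (real (card V) + real (card (faces V E \<rho>)) - real (card (graph_edges E))))"
proof -
  interpret rs V E \<rho> using assms by (unfold_locales) (auto simp: connected_graph_def)
  have fA: "fst ` A = V"
  proof
    show "fst ` A \<subseteq> V" by (auto simp: arcs_def)
  next
    show "V \<subseteq> fst ` A"
    proof
      fix u assume u: "u \<in> V"
      obtain x y where xy: "(x, y) \<in> A" using assms(2) by auto
      have "x \<in> V" using xy by (auto simp: arcs_def)
      then have "E\<^sup>*\<^sup>* u x" using u assms(1) by (auto simp: connected_graph_def)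
      then show "u \<in> fst ` A"
      proof (cases rule: converse_rtranclpE)
        case base then show ?thesis using xy by force
      next
        case (step w)
        then have "(u, w) \<in> A" using sg by (auto simp: arcs_def simple_graph_def)
        then show ?thesis by force
      qed
    qed
  qed
  have tr: "mtrace A (vf_transition V E \<rho>)
   = 4 * (\<Sum>a\<in>A. 1 / real (card (fc a)) * (1 / real (dd (fst a))))
     - 2 * real (card F) - 2 * real (card V) + 2 * real (card (graph_edges E))"
    using trace_eq fA card_A_edges by simp
  have cA: "real (card A) = 2 * real (card (graph_edges E))" using card_A_edges by simp
  obtain a0 where a0: "a0 \<in> A" using assms(2) by auto
  show ?thesis
    using assms(5)
  proof
    assume "regular_graph V E"
    then obtain k where k: "\<And>u. u \<in> V \<Longrightarrow> degree E u = k" by (auto simp: regular_graph_def)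
    have ddk: "dd u = k" if uV: "u \<in> V" for u
    proof -
      have "{r\<in>A. fst r = u} = Pair u ` {v. E u v}"
        using sg uV by (auto simp: arcs_def simple_graph_def)
      then have "dd u = card {v. E u v}" unfolding dd_def by (simp add: card_image inj_on_def)
      then show ?thesis using k uV by (simp add: degree_def)
    qed
    have kp: "k > 0" using dd_pos[OF a0] ddk a0 by (auto simp: arcs_def)
    have "(\<Sum>a\<in>A. 1 / real (card (fc a)) * (1 / real (dd (fst a))))
        = (\<Sum>a\<in>A. 1 / real (card (fc a)) * (1 / real k))"
      by (rule sum.cong[OF refl]) (auto simp: ddk arcs_def)
    also have "\<dots> = (\<Sum>a\<in>A. 1 / real (card (fc a))) * (1 / real k)" by (rule sum_distrib_right[symmetric])
    also have "\<dots> = real (card F) / real k" using card_F_sum by simp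
    finally have S: "(\<Sum>a\<in>A. 1 / real (card (fc a)) * (1 / real (dd (fst a)))) = real (card F) / real k" .
    have "real (card A) = (\<Sum>a\<in>A. (\<lambda>_. 1) (fst a))" by simp
    also have "\<dots> = (\<Sum>u\<in>fst ` A. real (dd u) * 1)" by (rule sum_tails)
    also have "\<dots> = real k * real (card V)" using fA ddk by simp
    finally have L: "2 * real (card (graph_edges E)) = real k * real (card V)" using cA by simp
    have Lv: "real (card (graph_edges E)) = real k * real (card V) / 2" using L by simp
    have np: "card V > 0" using a0 finV by (auto simp: arcs_def card_gt_0_iff)
    have Q: "real (card V) * real (card F) / real (card (graph_edges E)) = 2 * real (card F) / real k"
      unfolding Lv using kp np by (simp add: field_simps)
    show ?thesis unfolding tr S Q by (simp add: algebra_simps)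
  next
    assume "dual_regular V E \<rho>"
    then obtain c where c: "\<And>f. f \<in> F \<Longrightarrow> card f = c" by (auto simp: dual_regular_def dual_degree_def)
    have cc: "card (fc a) = c" if "a \<in> A" for a using c fc_in_F that by blast
    have cp: "c > 0" using card_fc[OF a0] cc[OF a0] by simp
    have "(\<Sum>a\<in>A. 1 / real (card (fc a)) * (1 / real (dd (fst a))))
        = (\<Sum>a\<in>A. 1 / real c * (1 / real (dd (fst a))))"
      by (rule sum.cong[OF refl]) (auto simp: cc)
    also have "\<dots> = 1 / real c * (\<Sum>a\<in>A. 1 / real (dd (fst a)))" by (rule sum_distrib_left[symmetric])
    also have "\<dots> = real (card V) / real c" using card_V_sum fA by simp
    finally have S: "(\<Sum>a\<in>A. 1 / real (card (fc a)) * (1 / real (dd (fst a)))) = real (card V) / real c" .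
    have "real (card A) = (\<Sum>a\<in>A. (\<lambda>_. 1) (fc a))" by simp
    also have "\<dots> = (\<Sum>f\<in>F. real (card f) * 1)" by (rule sum_faces)
    also have "\<dots> = real c * real (card F)" using c by simp
    finally have L: "2 * real (card (graph_edges E)) = real c * real (card F)" using cA by simp
    have Lv: "real (card (graph_edges E)) = real c * real (card F) / 2" using L by simp
    have sp: "card F > 0" using fc_in_F[OF a0] finA by (auto simp: faces_def card_gt_0_iff)
    have Q: "real (card V) * real (card F) / real (card (graph_edges E)) = 2 * real (card V) / real c"
      unfolding Lv using cp sp by (simp add: field_simps)
    show ?thesis unfolding tr S Q by (simp add: algebra_simps)
  qed
qed

end
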